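(* Let $\mathcal M=\{\rho_\theta:\theta\in\Theta\}$ be a two-parameter qubit model satisfying the regularity conditions and $\theta\in\Theta$. The following are equivalent: (i) $C_\theta^H[W]=C_\theta^S[W]$ for all $2\times2$ real positive definite matrices $W$; (ii) $\mathrm{Im}\,Z_\theta=0$; (iii) there exists a $2\times2$ real positive definite matrix $W_0$ with $C_\theta^H[W_0]=C_\theta^S[W_0]$.
   Context: Two-parameter qubit model: density matrices $\rho_\theta$ on $\mathbb C^2$, $\theta=(\theta^1,\theta^2)\in\Theta\subset\mathbb R^2$ open; regularity: each $\rho_\theta$ strictly positive, smooth in $\theta$, $\partial_1\rho_\theta,\partial_2\rho_\theta$ linearly independent ($\partial_i=\partial/\partial\theta^i$). SLD operators $L_{\theta,i}$ are the hermitian solutions of $\partial_i\rho_\theta=\tfrac12(\rho_\theta L_{\theta,i}+L_{\theta,i}\rho_\theta)$; SLD Fisher matrix $G_\theta=[\mathrm{tr}(\rho_\theta\tfrac12\{L_{\theta,i},L_{\theta,j}\})]$; SLD dual operators $L_\theta^i=\sum_j(G_\theta^{-1})^{ji}L_{\theta,j}$; $Z_\theta=[\mathrm{tr}(\rho_\theta L_\theta^jL_\theta^i)]_{i,j}$ and $\mathrm{Im}\,Z_\theta$ its entrywise imaginary part. SLD CR bound: $C_\theta^S[W]=\mathrm{Tr}(WG_\theta^{-1})$. Holevo bound: $C_\theta^H[W]=\min_{\vec X}\{\mathrm{Tr}(W\,\mathrm{Re}\,Z_\theta[\vec X])+\mathrm{TrAbs}(W\,\mathrm{Im}\,Z_\theta[\vec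 X])\}$ over pairs $\vec X=(X^1,X^2)$ of hermitian operators with $\mathrm{tr}(\rho_\theta X^i)=0$, $\mathrm{tr}(\partial_i\rho_\theta X^j)=\delta^j_i$, where $Z_\theta[\vec X]=[\mathrm{tr}(\rho_\theta X^jX^i)]_{i,j}$ and $\mathrm{TrAbs}$ of a diagonalizable matrix is the sum of absolute values of its eigenvalues. *)

theory Defs
  imports "HOL-Analysis.Analysis" "HOL-Computational_Algebra.Polynomial"
begin

type_synonym cmat = "complex^2^2"
type_synonym rmat = "real^2^2"

definition adj :: "cmat \<Rightarrow> cmat" where
  "adj A = (\<chi> i j. cnj (A $ j $ i))"

definition hermitian :: "cmat \<Rightarrow> bool" where
  "hermitian A \<longleftrightarrow> adj A = A"

definition strictly_positive :: "cmat \<Rightarrow> bool" where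
  "strictly_positive A \<longleftrightarrow> hermitian A \<and>
     (\<forall>v::complex^2. v \<noteq> 0 \<longrightarrow> 0 < Re (\<Sum>i\<in>UNIV. cnj (v $ i) * (A *v v) $ i))"

definition density_matrix :: "cmat \<Rightarrow> bool" where
  "density_matrix A \<longleftrightarrow> hermitian A \<and> trace A = 1 \<and>
     (\<forall>v::complex^2. 0 \<le> Re (\<Sum>i\<in>UNIV. cnj (v $ i) * (A *v v) $ i))"

definition pd :: "2 \<Rightarrow> (real^2 \<Rightarrow> 'b::real_normed_vector) \<Rightarrow> real^2 \<Rightarrow> 'b" where
  "pd i f x = vector_derivative (\<lambda>t. f (x + t *\<^sub>R axis i 1)) (at 0)"

fun ipd :: "2 list \<Rightarrow> (real^2 \<Rightarrow> 'b::real_normed_vector) \<Rightarrow> real^2 \<Rightarrow> 'b" where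
  "ipd [] f = f"
| "ipd (i # is) f = pd i (ipd is f)"

definition smooth_on :: "(real^2) set \<Rightarrow> (real^2 \<Rightarrow> 'b::real_normed_vector) \<Rightarrow> bool" where
  "smooth_on S f \<longleftrightarrow> (\<forall>is. \<forall>x\<in>S. ipd is f differentiable (at x))"

definition regular_qubit_model :: "(real^2) set \<Rightarrow> (real^2 \<Rightarrow> cmat) \<Rightarrow> bool" where
  "regular_qubit_model \<Theta> \<rho> \<longleftrightarrow> open \<Theta> \<and>
     (\<forall>\<theta>\<in>\<Theta>. density_matrix (\<rho> \<theta>) \<and> strictly_positive (\<rho> \<theta>)) \<and>
     smooth_on \<Theta> \<rho> \<and>
     (\<forall>\<theta>\<in>\<Theta>. \<forall>a b::real. a *\<^sub>R pd 0 \<rho> \<theta> + b *\<^sub>R pd 1 \<rho> \<theta> = 0 \<longrightarrow> a = 0 \<and> b = 0)"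

definition SLD :: "(real^2 \<Rightarrow> cmat) \<Rightarrow> real^2 \<Rightarrow> 2 \<Rightarrow> cmat" where
  "SLD \<rho> \<theta> i = (THE L. hermitian L \<and>
      pd i \<rho> \<theta> = (1/2::real) *\<^sub>R (\<rho> \<theta> ** L + L ** \<rho> \<theta>))"

(* SLD Fisher information matrix (its entries are real) *)
definition SLD_Fisher :: "(real^2 \<Rightarrow> cmat) \<Rightarrow> real^2 \<Rightarrow> rmat" where
  "SLD_Fisher \<rho> \<theta> = (\<chi> i j. Re (trace (\<rho> \<theta> **
      ((1/2::real) *\<^sub>R (SLD \<rho> \<theta> i ** SLD \<rho> \<theta> j + SLD \<rho> \<theta> j ** SLD \<rho> \<theta> i)))))"

definition SLD_dual :: "(real^2 \<Rightarrow> cmat) \<Rightarrow> real^2 \<Rightarrow> 2 \<Rightarrow> cmat" where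
  "SLD_dual \<rho> \<theta> i = (\<Sum>j\<in>UNIV. (matrix_inv (SLD_Fisher \<rho> \<theta>) $ j $ i) *\<^sub>R SLD \<rho> \<theta> j)"

definition Zmat :: "cmat \<Rightarrow> (2 \<Rightarrow> cmat) \<Rightarrow> cmat" where
  "Zmat r X = (\<chi> i j. trace (r ** X j ** X i))"

definition Z_SLD :: "(real^2 \<Rightarrow> cmat) \<Rightarrow> real^2 \<Rightarrow> cmat" where
  "Z_SLD \<rho> \<theta> = Zmat (\<rho> \<theta>) (SLD_dual \<rho> \<theta>)"

definition ReM :: "cmat \<Rightarrow> rmat" where "ReM Z = (\<chi> i j. Re (Z $ i $ j))"
definition ImM :: "cmat \<Rightarrow> rmat" where "ImM Z = (\<chi> i j. Im (Z $ i $ j))"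

(* characteristic polynomial det(x I - M) of a real 2x2 matrix, over C *)
definition charpoly2 :: "rmat \<Rightarrow> complex poly" where
  "charpoly2 M = [: complex_of_real (det M), - complex_of_real (trace M), 1 :]"

(* sum of absolute values of the eigenvalues (with algebraic multiplicity) *)
definition TrAbs :: "rmat \<Rightarrow> real" where
  "TrAbs M = (\<Sum>z\<in>{z. poly (charpoly2 M) z = 0}. real (order z (charpoly2 M)) * cmod z)"

definition real_pos_def :: "rmat \<Rightarrow> bool" where
  "real_pos_def W \<longleftrightarrow> transpose W = W \<and> (\<forall>v::real^2. v \<noteq> 0 \<longrightarrow> 0 < v \<bullet> (W *v v))"

definition SLD_CR_bound :: "(real^2 \<Rightarrow> cmat) \<Rightarrow> real^2 \<Rightarrow> rmat \<Rightarrow> real" where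
  "SLD_CR_bound \<rho> \<theta> W = trace (W ** matrix_inv (SLD_Fisher \<rho> \<theta>))"

definition locally_unbiased :: "(real^2 \<Rightarrow> cmat) \<Rightarrow> real^2 \<Rightarrow> (2 \<Rightarrow> cmat) \<Rightarrow> bool" where
  "locally_unbiased \<rho> \<theta> X \<longleftrightarrow> (\<forall>i. hermitian (X i) \<and> trace (\<rho> \<theta> ** X i) = 0) \<and>
     (\<forall>i j. trace (pd i \<rho> \<theta> ** X j) = (if i = j then 1 else 0))"

definition holevo_fun :: "(real^2 \<Rightarrow> cmat) \<Rightarrow> real^2 \<Rightarrow> rmat \<Rightarrow> (2 \<Rightarrow> cmat) \<Rightarrow> real" where
  "holevo_fun \<rho> \<theta> W X = trace (W ** ReM (Zmat (\<rho> \<theta>) X)) + TrAbs (W ** ImM (Zmat (\<rho> \<theta>) X))"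

(* the minimum over locally unbiased X (as an infimum; it is attained) *)
definition holevo_bound :: "(real^2 \<Rightarrow> cmat) \<Rightarrow> real^2 \<Rightarrow> rmat \<Rightarrow> real" where
  "holevo_bound \<rho> \<theta> W = Inf {holevo_fun \<rho> \<theta> W X | X. locally_unbiased \<rho> \<theta> X}"

end

theory Submission
  imports Defs
begin
lemma adj_nth[simp]: "adj A $ i $ j = cnj (A $ j $ i)" by (simp add: adj_def)
lemma adj_adj[simp]: "adj (adj A) = A" by (simp add: vec_eq_iff)
lemma adj_add: "adj (A + B) = adj A + adj B" by (simp add: vec_eq_iff)
lemma adj_diff: "adj (A - B) = adj A - adj B" by (simp add: vec_eq_iff)
lemma adj_scaleR: "adj (c *\<^sub>R A) = c *\<^sub>R adj A" by (simp add: vec_eq_iff)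
lemma adj_mult: "adj (A ** B) = adj B ** adj A"
  by (simp add: vec_eq_iff matrix_matrix_mult_def mult.commute)
lemma trace_adj: "trace (adj A) = cnj (trace A)"
  by (simp add: trace_def)
lemma trace_scaleR: "trace (c *\<^sub>R (A::cmat)) = c *\<^sub>R trace A"
  by (simp add: trace_def scaleR_sum_right)
lemma scaleR_mult_left: "(c *\<^sub>R (A::cmat)) ** B = c *\<^sub>R (A ** B)"
  by (simp add: vec_eq_iff matrix_matrix_mult_def scaleR_sum_right)
lemma scaleR_mult_right: "(A::cmat) ** (c *\<^sub>R B) = c *\<^sub>R (A ** B)"
  by (simp add: vec_eq_iff matrix_matrix_mult_def scaleR_sum_right)
lemma matrix_add_rdistrib': "((A::cmat) + B) ** C = A ** C + B ** C"
  by (simp add: vec_eq_iff matrix_matrix_mult_def sum.distrib algebra_simps)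
lemma matrix_diff_ldistrib: "(A::cmat) ** (B - C) = A ** B - A ** C"
  by (simp add: vec_eq_iff matrix_matrix_mult_def sum_subtractf algebra_simps)
lemma matrix_diff_rdistrib: "((A::cmat) - B) ** C = A ** C - B ** C"
  by (simp add: vec_eq_iff matrix_matrix_mult_def sum_subtractf algebra_simps)
lemma two_eq_zero: "(0::2) = 2" by simp
lemma "linear (\<lambda>A::cmat. adj A)" by (rule linearI) (simp_all add: adj_add adj_scaleR)
lemma "linear (\<lambda>A::cmat. trace A)" by (rule linearI) (simp_all add: trace_add trace_scaleR)
lemma "bounded_linear (\<lambda>A::cmat. trace A)" 
  by (rule linear_conv_bounded_linear[THEN iffD1], rule linearI) (simp_all add: trace_add trace_scaleR)

definition quad :: "cmat \<Rightarrow> complex^2 \<Rightarrow> complex" where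
  "quad r v = (\<Sum>i\<in>UNIV. cnj (v $ i) * (r *v v) $ i)"

definition col :: "cmat \<Rightarrow> 2 \<Rightarrow> complex^2" where "col C k = (\<chi> j. C $ j $ k)"

lemma trace_quad: "trace (r ** C ** adj C) = quad r (col C 1) + quad r (col C 2)"
  by (simp add: trace_def matrix_matrix_mult_def matrix_vector_mult_def quad_def col_def sum_2 algebra_simps)

lemma quad_nonneg: "density_matrix r \<Longrightarrow> 0 \<le> Re (quad r v)"
  by (simp add: density_matrix_def quad_def)

lemma quad_pos: "strictly_positive r \<Longrightarrow> v \<noteq> 0 \<Longrightarrow> 0 < Re (quad r v)"
  by (simp add: strictly_positive_def quad_def)

lemma quad_nonneg': "strictly_positive r \<Longrightarrow> 0 \<le> Re (quad r v)"
  by (cases "v = 0") (auto simp: quad_def dest: quad_pos[of r v])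

lemma psd: "density_matrix r \<Longrightarrow> 0 \<le> Re (trace (r ** C ** adj C))"
  using quad_nonneg[of r] by (simp add: trace_quad)

lemma pos_strict: assumes "strictly_positive r" "C \<noteq> 0"
  shows "0 < Re (trace (r ** C ** adj C))"
proof -
  have "col C 1 \<noteq> 0 \<or> col C 2 \<noteq> 0"
  proof (rule ccontr)
    assume "\<not> ?thesis"
    hence "\<forall>j. C $ j $ 1 = 0 \<and> C $ j $ 2 = 0" by (auto simp: col_def vec_eq_iff)
    hence "C = 0" by (simp add: vec_eq_iff) (metis exhaust_2)
    with assms show False by simp
  qed
  then show ?thesis using quad_pos[OF assms(1)] quad_nonneg'[OF assms(1)]
    by (auto simp: trace_quad intro: add_pos_nonneg add_nonneg_pos)
qed

definition ip :: "cmat \<Rightarrow> cmat \<Rightarrow> cmat \<Rightarrow> complex" where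
  "ip r A B = trace (r ** A ** B)"

lemma trace_cyc: "trace ((A::cmat) ** B) = trace (B ** A)" by (rule trace_mul_sym)

lemma ip_conj:
  assumes "hermitian r" "hermitian A" "hermitian B"
  shows "ip r B A = cnj (ip r A B)"
proof -
  have "cnj (ip r A B) = trace (adj (r ** A ** B))" by (simp add: ip_def trace_adj)
  also have "adj (r ** A ** B) = B ** (A ** r)"
    using assms by (simp add: adj_mult hermitian_def matrix_mul_assoc)
  also have "trace (B ** (A ** r)) = trace (r ** B ** A)"
    by (metis matrix_mul_assoc trace_cyc)
  finally show ?thesis by (simp add: ip_def)
qed

lemma ip_add1: "ip r (A + B) C = ip r A C + ip r B C"
  by (simp add: ip_def matrix_add_ldistrib matrix_add_rdistrib' trace_add)
lemma ip_add2: "ip r A (B + C) = ip r A B + ip r A C"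
  by (simp add: ip_def matrix_add_ldistrib trace_add)
lemma ip_diff1: "ip r (A - B) C = ip r A C - ip r B C"
  by (simp add: ip_def matrix_diff_ldistrib matrix_diff_rdistrib trace_sub)
lemma ip_diff2: "ip r A (B - C) = ip r A B - ip r A C"
  by (simp add: ip_def matrix_diff_ldistrib trace_sub)
lemma ip_scale1: "ip r (c *\<^sub>R A) B = c *\<^sub>R ip r A B"
  by (simp add: ip_def scaleR_mult_left scaleR_mult_right trace_scaleR)
lemma ip_scale2: "ip r A (c *\<^sub>R B) = c *\<^sub>R ip r A B"
  by (simp add: ip_def scaleR_mult_left scaleR_mult_right trace_scaleR)

lemma ip_self_real: "hermitian r \<Longrightarrow> hermitian A \<Longrightarrow> Im (ip r A A) = 0"
  using ip_conj[of r A A] by (auto simp: complex_eq_iff)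

lemma n_nonneg: "density_matrix r \<Longrightarrow> hermitian A \<Longrightarrow> 0 \<le> Re (ip r A A)"
  using psd[of r A] by (simp add: ip_def hermitian_def)

lemma n_pos: "strictly_positive r \<Longrightarrow> hermitian A \<Longrightarrow> A \<noteq> 0 \<Longrightarrow> 0 < Re (ip r A A)"
  using pos_strict[of r A] by (simp add: ip_def hermitian_def)

definition Phi :: "cmat \<Rightarrow> cmat \<Rightarrow> cmat" where "Phi r L = r ** L + L ** r"

lemma Phi_linear: "linear (Phi r)"
  by (rule linearI) (simp_all add: Phi_def matrix_add_ldistrib matrix_add_rdistrib' scaleR_mult_left scaleR_mult_right algebra_simps)

lemma Phi_adj: "hermitian r \<Longrightarrow> Phi r (adj L) = adj (Phi r L)"
  by (simp add: Phi_def adj_add adj_mult hermitian_def add.commute)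

lemma lyap_zero0:
  assumes r: "strictly_positive r" and P: "Phi r M = 0" and h: "adj M = M \<or> adj M = - M"
  shows "M = 0"
proof (rule ccontr)
  assume M: "M \<noteq> 0"
  have comm: "adj M ** M = M ** adj M" using h by (auto simp: vec_eq_iff matrix_matrix_mult_def)
  have "0 = trace (adj M ** Phi r M)" using P by (simp add: vec_eq_iff matrix_matrix_mult_def trace_def)
  also have "\<dots> = trace (adj M ** r ** M) + trace (adj M ** M ** r)"
    by (simp add: Phi_def matrix_add_ldistrib trace_add matrix_mul_assoc)
  also have "trace (adj M ** r ** M) = trace (r ** M ** adj M)"
    by (metis matrix_mul_assoc trace_cyc)
  also have "trace (adj M ** M ** r) = trace (r ** M ** adj M)"
    by (metis comm matrix_mul_assoc trace_cyc)
  finally have "Re (trace (r ** M ** adj M)) = 0" by (simp add: complex_eq_iff)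
  with pos_strict[OF r M] show False by simp
qed

lemma lyap_inj:
  assumes r: "strictly_positive r" and P: "Phi r L = 0" shows "L = 0"
proof -
  have hr: "hermitian r" using r by (simp add: strictly_positive_def)
  have Pa: "Phi r (adj L) = 0" using P Phi_adj[OF hr, of L] by (simp add: vec_eq_iff)
  have lin: "linear (Phi r)" by (rule Phi_linear)
  have "Phi r (L + adj L) = 0" using P Pa linear_add[OF lin] by simp
  hence H: "L + adj L = 0" by (rule lyap_zero0[OF r]) (simp add: adj_add add.commute)
  have "Phi r (L - adj L) = 0" using P Pa linear_diff[OF lin] by simp
  hence K: "L - adj L = 0" by (rule lyap_zero0[OF r]) (simp add: adj_diff)
  have "(2::real) *\<^sub>R L = (L + adj L) + (L - adj L)" by (simp add: scaleR_2)
  with H K show ?thesis by simp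
qed

lemma lyap_surj:
  assumes r: "strictly_positive r" shows "\<exists>L. Phi r L = D"
proof -
  have "inj (Phi r)" using Phi_linear[of r] lyap_inj[OF r] by (simp add: linear_injective_0)
  hence "surj (Phi r)" using Phi_linear linear_injective_imp_surjective by blast
  thus ?thesis by (metis surjD)
qed

lemma SLD_ex1:
  assumes r: "strictly_positive r" and D: "hermitian D"
  shows "\<exists>!L. hermitian L \<and> D = (1/2::real) *\<^sub>R (r ** L + L ** r)"
proof -
  have hr: "hermitian r" using r by (simp add: strictly_positive_def)
  obtain L where L: "Phi r L = (2::real) *\<^sub>R D" using lyap_surj[OF r] by blast
  define H where "H = (1/2::real) *\<^sub>R (L + adj L)"
  have "Phi r H = (1/2::real) *\<^sub>R (Phi r L + Phi r (adj L))"
    using Phi_linear[of r] by (simp add: H_def linear_add linear_scale)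
  also have "\<dots> = (1/2::real) *\<^sub>R ((2::real) *\<^sub>R D + adj ((2::real) *\<^sub>R D))"
    using L Phi_adj[OF hr, of L] by simp
  also have "\<dots> = (2::real) *\<^sub>R D" using D by (simp add: hermitian_def adj_scaleR)
  finally have PH: "Phi r H = (2::real) *\<^sub>R D" .
  have hH: "hermitian H" by (simp add: H_def hermitian_def adj_scaleR adj_add add.commute)
  show ?thesis
  proof (rule ex1I[of _ H])
    show "hermitian H \<and> D = (1/2::real) *\<^sub>R (r ** H + H ** r)"
      using hH PH by (simp add: Phi_def)
  next
    fix M assume M: "hermitian M \<and> D = (1/2::real) *\<^sub>R (r ** M + M ** r)"
    hence "Phi r M = (2::real) *\<^sub>R D" by (simp add: Phi_def)
    hence "Phi r (M - H) = 0" using PH Phi_linear[of r] by (simp add: linear_diff)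
    thus "M = H" using lyap_inj[OF r] by (metis eq_iff_diff_eq_0)
  qed
qed

lemma pd_hasvd:
  assumes "\<rho> differentiable (at \<theta>)"
  shows "((\<lambda>t. \<rho> (\<theta> + t *\<^sub>R axis i 1)) has_vector_derivative pd i \<rho> \<theta>) (at 0)"
proof -
  let ?h = "\<lambda>t::real. \<theta> + t *\<^sub>R axis i (1::real)"
  have "?h differentiable (at 0)" by (intro derivative_intros)
  moreover have "\<rho> differentiable (at (?h 0))" using assms by simp
  ultimately have "(\<rho> \<circ> ?h) differentiable (at 0)" by (rule differentiable_chain_at)
  hence "(\<lambda>t. \<rho> (?h t)) differentiable (at 0)" by (simp add: o_def)
  thus ?thesis unfolding pd_def by (simp add: vector_derivative_works[symmetric])
qed

lemma pd_linear_const: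
  fixes f :: "'a::real_normed_vector \<Rightarrow> 'b::real_normed_vector" and \<rho> :: "real^2 \<Rightarrow> 'a"
  assumes "open \<Theta>" "\<theta> \<in> \<Theta>" "\<rho> differentiable (at \<theta>)" "bounded_linear f" "\<forall>x\<in>\<Theta>. f (\<rho> x) = c"
  shows "f (pd i \<rho> \<theta>) = 0"
proof -
  let ?h = "\<lambda>t::real. \<theta> + t *\<^sub>R axis i (1::real)"
  have d1: "((\<lambda>t. f (\<rho> (?h t))) has_vector_derivative f (pd i \<rho> \<theta>)) (at 0)"
    using bounded_linear.has_vector_derivative[OF assms(4) pd_hasvd[OF assms(3)]] .
  let ?S = "?h -` \<Theta>"
  have oS: "open ?S" by (rule continuous_open_vimage[OF assms(1)]) (intro continuous_intros)
  have "0 \<in> ?S" using assms(2) by simp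
  have "((\<lambda>t. c) has_vector_derivative 0) (at (0::real))" by (rule derivative_intros)
  hence d2: "((\<lambda>t. f (\<rho> (?h t))) has_vector_derivative 0) (at 0)"
    by (rule has_vector_derivative_transform_within_open[OF _ oS \<open>0 \<in> ?S\<close>]) (use assms(5) in auto)
  show ?thesis using vector_derivative_unique_at[OF d1 d2] .
qed

lemma bl_adj: "bounded_linear (\<lambda>A::cmat. adj A - A)"
  by (rule linear_conv_bounded_linear[THEN iffD1], rule linearI) (simp_all add: adj_add adj_scaleR algebra_simps)
lemma bl_trace: "bounded_linear (\<lambda>A::cmat. trace A)" 
  by (rule linear_conv_bounded_linear[THEN iffD1], rule linearI) (simp_all add: trace_add trace_scaleR)

lemma regular_facts:
  assumes R: "regular_qubit_model \<Theta> \<rho>" and th: "\<theta> \<in> \<Theta>"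
  shows "density_matrix (\<rho> \<theta>)" "strictly_positive (\<rho> \<theta>)"
    "hermitian (pd i \<rho> \<theta>)" "trace (pd i \<rho> \<theta>) = 0"
    "\<And>a b. a *\<^sub>R pd 0 \<rho> \<theta> + b *\<^sub>R pd 1 \<rho> \<theta> = 0 \<Longrightarrow> a = 0 \<and> b = 0"
proof -
  have o: "open \<Theta>" and d: "\<rho> differentiable (at \<theta>)"
    using R th unfolding regular_qubit_model_def smooth_on_def by (auto dest: spec[of _ "[]"])
  show "density_matrix (\<rho> \<theta>)" "strictly_positive (\<rho> \<theta>)"
    using R th unfolding regular_qubit_model_def by auto
  have "adj (pd i \<rho> \<theta>) - pd i \<rho> \<theta> = 0"
    by (rule pd_linear_const[OF o th d bl_adj, where c=0]) 
       (use R in \<open>auto simp: regular_qubit_model_def density_matrix_def hermitian_def\<close>)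
  thus "hermitian (pd i \<rho> \<theta>)" by (simp add: hermitian_def)
  show "trace (pd i \<rho> \<theta>) = 0"
    by (rule pd_linear_const[OF o th d bl_trace, where c=1]) 
       (use R in \<open>auto simp: regular_qubit_model_def density_matrix_def\<close>)
  show "\<And>a b. a *\<^sub>R pd 0 \<rho> \<theta> + b *\<^sub>R pd 1 \<rho> \<theta> = 0 \<Longrightarrow> a = 0 \<and> b = 0"
    using R th unfolding regular_qubit_model_def by blast
qed

lemma hermitian_one: "hermitian (mat 1)"
  by (simp add: hermitian_def vec_eq_iff mat_def)

lemma herm_comb: "hermitian A \<Longrightarrow> hermitian B \<Longrightarrow> hermitian (a *\<^sub>R A + b *\<^sub>R B)"
  by (simp add: hermitian_def adj_add adj_scaleR)
lemma herm_diff: "hermitian A \<Longrightarrow> hermitian B \<Longrightarrow> hermitian (A - B)"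
  by (simp add: hermitian_def adj_diff)

definition inv2 :: "rmat \<Rightarrow> rmat" where
  "inv2 A = (\<chi> i j. (if i = 1 \<and> j = 1 then A$2$2 else if i = 1 \<and> j = 2 then - A$1$2
     else if i = 2 \<and> j = 1 then - A$2$1 else A$1$1) / det A)"

lemma inv2_nth: "inv2 A $ 1 $ 1 = A$2$2 / det A" "inv2 A $ 1 $ 2 = - A$1$2 / det A"
   "inv2 A $ 2 $ 1 = - A$2$1 / det A" "inv2 A $ 2 $ 2 = A$1$1 / det A"
  by (simp_all add: inv2_def)

lemma inv2_works: assumes "det A \<noteq> 0" shows "A ** inv2 A = mat 1" "inv2 A ** A = mat 1"
  using assms unfolding det_2 by (auto simp: det_2 vec_eq_iff forall_2 sum_2 matrix_matrix_mult_def mat_def inv2_nth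
     add_divide_distrib[symmetric] diff_divide_distrib[symmetric] mult.commute)

lemma matrix_inv2: assumes "det (A::rmat) \<noteq> 0" shows "matrix_inv A = inv2 A"
proof -
  have "\<exists>B. A ** B = mat 1 \<and> B ** A = mat 1" using inv2_works[OF assms] by blast
  hence M: "A ** matrix_inv A = mat 1 \<and> matrix_inv A ** A = mat 1"
    unfolding matrix_inv_def by (rule someI_ex)
  have "matrix_inv A = matrix_inv A ** (A ** inv2 A)" using inv2_works[OF assms] by simp
  also have "\<dots> = inv2 A" using M by (simp add: matrix_mul_assoc)
  finally show ?thesis .
qed

lemma pd2:
  assumes "real_pos_def W"
  shows "W$1$2 = W$2$1" "0 < W$1$1" "0 < W$2$2" "0 < det W"
proof -
  have s: "transpose W = W" and q: "\<And>v. v \<noteq> 0 \<Longrightarrow> 0 < v \<bullet> (W *v v)"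
    using assms by (auto simp: real_pos_def_def)
  have "transpose W $ 1 $ 2 = W $ 1 $ 2" using s by simp
  thus e: "W$1$2 = W$2$1" by (simp add: transpose_def)
  have qf: "v \<bullet> (W *v v) = (v$1) * (v$1) * (W$1$1) + 2 * (v$1) * (v$2) * (W$1$2) + (v$2) * (v$2) * (W$2$2)" for v
    unfolding inner_vec_def sum_2 matrix_vector_mult_def using e by (simp add: sum_2 algebra_simps)
  have nz: "(vector [a, b] :: real^2) \<noteq> 0" if "a \<noteq> 0 \<or> b \<noteq> 0" for a b
    using that by (auto simp: vec_eq_iff forall_2)
  show p1: "0 < W$1$1" using q[OF nz[of 1 0]] qf[of "vector [1,0]"] by simp
  show "0 < W$2$2" using q[OF nz[of 0 1]] qf[of "vector [0,1]"] by simp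
  have "0 < W$1$1 * (W$1$1 * W$2$2 - W$1$2 * W$1$2)"
    using q[OF nz[of "- W$1$2" "W$1$1"]] qf[of "vector [- W$1$2, W$1$1]"] p1
    by (simp add: algebra_simps power2_eq_square)
  hence "0 < W$1$1 * W$2$2 - W$1$2 * W$1$2" using p1 by (simp add: zero_less_mult_iff)
  thus "0 < det W" using e by (simp add: det_2)
qed

lemma TrAbs_zero: "TrAbs ((W::rmat) ** 0) = 0"
proof -
  have "W ** (0::rmat) = 0" by (simp add: vec_eq_iff matrix_matrix_mult_def)
  moreover have "charpoly2 0 = [:0, 0, 1:]" by (simp add: charpoly2_def det_2 trace_def)
  moreover have "{z. poly [:0, 0, 1:] z = 0} = {0::complex}" by auto
  ultimately show ?thesis by (simp add: TrAbs_def)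
qed

lemma TrAbs_lb:
  fixes W A :: rmat
  assumes "W$1$2 = W$2$1" "0 \<le> det W" "A$1$1 = 0" "A$2$2 = 0" "A$2$1 = - A$1$2"
  shows "\<bar>A$1$2\<bar> * sqrt (det W) \<le> TrAbs (W ** A)"
proof -
  define d where "d = det W * (A$1$2)^2"
  have d0: "0 \<le> d" using assms by (simp add: d_def)
  have "det (W ** A) = d" using assms by (simp add: d_def det_2 matrix_matrix_mult_def sum_2 power2_eq_square algebra_simps)
  moreover have "trace (W ** A) = 0"
    using assms by (simp add: trace_def sum_2 matrix_matrix_mult_def)
  ultimately have cp: "charpoly2 (W ** A) = [: complex_of_real d, 0, 1 :]"
    by (simp add: charpoly2_def)
  define p where "p = [: complex_of_real d, 0, 1 :]"
  have pnz: "p \<noteq> 0" by (simp add: p_def)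
  define z0 where "z0 = \<i> * complex_of_real (sqrt d)"
  have "z0 * z0 = - complex_of_real d" using d0 by (simp add: z0_def algebra_simps flip: of_real_mult)
  hence root: "poly p z0 = 0" by (simp add: p_def)
  let ?R = "{z. poly p z = 0}"
  have fin: "finite ?R" using poly_roots_finite[OF pnz] .
  have ord: "order z0 p \<noteq> 0" using root pnz order_root by blast
  have "cmod z0 \<le> real (order z0 p) * cmod z0" using ord
    by (simp add: mult_le_cancel_right1 norm_ge_zero)
  also have "\<dots> \<le> (\<Sum>z\<in>?R. real (order z p) * cmod z)"
    by (rule member_le_sum) (use root fin in auto)
  finally have "cmod z0 \<le> TrAbs (W ** A)" by (simp add: TrAbs_def cp p_def)
  moreover have "cmod z0 = \<bar>A$1$2\<bar> * sqrt (det W)"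
    using d0 assms by (simp add: z0_def norm_mult d_def real_sqrt_mult mult.commute)
  ultimately show ?thesis by simp
qed

lemma Re_ip_sym: "hermitian r \<Longrightarrow> hermitian A \<Longrightarrow> hermitian B \<Longrightarrow> Re (ip r B A) = Re (ip r A B)"
  using ip_conj[of r A B] by simp
lemma Im_ip_anti: "hermitian r \<Longrightarrow> hermitian A \<Longrightarrow> hermitian B \<Longrightarrow> Im (ip r B A) = - Im (ip r A B)"
  using ip_conj[of r A B] by simp

locale qm =
  fixes \<Theta> :: "(real^2) set" and \<rho> :: "real^2 \<Rightarrow> cmat" and \<theta> :: "real^2"
  assumes R: "regular_qubit_model \<Theta> \<rho>" and th: "\<theta> \<in> \<Theta>"
begin

abbreviation "r \<equiv> \<rho> \<theta>"
abbreviation "L \<equiv> SLD \<rho> \<theta>"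
abbreviation "G \<equiv> SLD_Fisher \<rho> \<theta>"

lemma dm: "density_matrix r" and sp: "strictly_positive r" and hr: "hermitian r"
  using regular_facts[OF R th] by (auto simp: strictly_positive_def)

lemma SLD_prop: "hermitian (L i) \<and> pd i \<rho> \<theta> = (1/2::real) *\<^sub>R (r ** L i + L i ** r)"
  unfolding SLD_def by (rule theI'[OF SLD_ex1[OF sp regular_facts(3)[OF R th]]])

lemma hL: "hermitian (L i)" using SLD_prop by blast

lemma tr_pd: assumes "hermitian X"
  shows "trace (pd i \<rho> \<theta> ** X) = complex_of_real (Re (ip r (L i) X))"
proof -
  have "trace (pd i \<rho> \<theta> ** X) = (1/2::real) *\<^sub>R (trace (r ** L i ** X) + trace (L i ** r ** X))"
    using SLD_prop[of i] by (simp add: scaleR_mult_left matrix_add_rdistrib' trace_add trace_scaleR)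
  also have "trace (L i ** r ** X) = ip r X (L i)"
    by (metis ip_def matrix_mul_assoc trace_cyc)
  also have "\<dots> = cnj (ip r (L i) X)" using ip_conj[OF hr hL assms] .
  finally show ?thesis by (simp add: ip_def complex_eq_iff)
qed

lemma G_entry: "G $ i $ j = Re (ip r (L i) (L j))"
proof -
  have "G $ i $ j = (1/2) * (Re (ip r (L i) (L j)) + Re (ip r (L j) (L i)))"
    by (simp add: SLD_Fisher_def ip_def scaleR_mult_right matrix_add_ldistrib trace_add trace_scaleR matrix_mul_assoc)
  thus ?thesis using Re_ip_sym[OF hr hL hL, of j i] by simp
qed

lemma trace_rL: "trace (r ** L i) = 0"
proof -
  have "complex_of_real (Re (ip r (L i) (mat 1))) = 0"
    using tr_pd[OF hermitian_one, of i] regular_facts(4)[OF R th, of i] by simp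
  moreover have "ip r (L i) (mat 1) = trace (r ** L i)" by (simp add: ip_def)
  moreover have "ip r (mat 1) (L i) = trace (r ** L i)" by (simp add: ip_def)
  moreover have "ip r (mat 1) (L i) = cnj (ip r (L i) (mat 1))" using ip_conj[OF hr hL hermitian_one] .
  ultimately show ?thesis by (simp add: complex_eq_iff)
qed

lemma L_indep: assumes "a *\<^sub>R L 1 + b *\<^sub>R L 2 = 0" shows "a = 0 \<and> b = 0"
proof -
  have pdP: "pd i \<rho> \<theta> = (1/2::real) *\<^sub>R Phi r (L i)" for i using SLD_prop[of i] by (simp add: Phi_def)
  have "b *\<^sub>R pd 0 \<rho> \<theta> + a *\<^sub>R pd 1 \<rho> \<theta> = (1/2::real) *\<^sub>R Phi r (a *\<^sub>R L 1 + b *\<^sub>R L 2)"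
    using Phi_linear[of r] by (simp add: pdP linear_add linear_scale algebra_simps two_eq_zero)
  also have "\<dots> = 0" using assms Phi_linear[of r] by (simp add: linear_0)
  finally show ?thesis using regular_facts(5)[OF R th] by blast
qed

lemma quad_expand:
  assumes "hermitian A" "hermitian B"
  shows "Re (ip r (a *\<^sub>R A + b *\<^sub>R B) (a *\<^sub>R A + b *\<^sub>R B)) =
     a * a * Re (ip r A A) + 2 * a * b * Re (ip r A B) + b * b * Re (ip r B B)"
  using Re_ip_sym[OF hr assms] by (simp add: ip_add1 ip_add2 ip_scale1 ip_scale2 algebra_simps)

lemma G_pd: "real_pos_def G"
proof -
  have sym: "transpose G = G"
    by (simp add: vec_eq_iff transpose_def G_entry Re_ip_sym[OF hr hL hL])
  have "0 < v \<bullet> (G *v v)" if v: "v \<noteq> 0" for v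
  proof -
    have "v \<bullet> (G *v v) = Re (ip r (v$1 *\<^sub>R L 1 + v$2 *\<^sub>R L 2) (v$1 *\<^sub>R L 1 + v$2 *\<^sub>R L 2))"
      unfolding quad_expand[OF hL hL] 
      by (simp add: inner_vec_def matrix_vector_mult_def sum_2 G_entry Re_ip_sym[OF hr hL hL, of 1 2] algebra_simps)
    moreover have "v$1 *\<^sub>R L 1 + v$2 *\<^sub>R L 2 \<noteq> 0"
    proof
      assume "v$1 *\<^sub>R L 1 + v$2 *\<^sub>R L 2 = 0"
      hence "v$1 = 0 \<and> v$2 = 0" by (rule L_indep)
      hence "v = 0" by (simp add: vec_eq_iff forall_2)
      with v show False by simp
    qed
    ultimately show ?thesis using n_pos[OF sp herm_comb[OF hL hL]] by simp
  qed
  with sym show ?thesis by (simp add: real_pos_def_def)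
qed

end

context qm begin

abbreviation "H \<equiv> matrix_inv G"
abbreviation "D \<equiv> SLD_dual \<rho> \<theta>"

lemma detG: "0 < det G" using pd2(4)[OF G_pd] .
lemma Gsym: "G$1$2 = G$2$1" using pd2(1)[OF G_pd] .
lemma H_inv2: "H = inv2 G" using matrix_inv2 detG by simp
lemma GH: "G ** H = mat 1" using inv2_works(1)[of G] detG H_inv2 by simp
lemma Hsym: "H$1$2 = H$2$1" using Gsym by (simp add: H_inv2 inv2_nth)
lemma Hsym': "H$i$j = H$j$i"
  using Hsym exhaust_2[of i] exhaust_2[of j] by auto

lemma D_eq: "D j = H$1$j *\<^sub>R L 1 + H$2$j *\<^sub>R L 2"
  by (simp add: SLD_dual_def sum_2)

lemma hD: "hermitian (D j)" unfolding D_eq by (rule herm_comb[OF hL hL])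

lemma GH_entry: "G$k$1 * H$1$j + G$k$2 * H$2$j = (if k = j then 1 else 0)"
proof -
  have "(G ** H) $ k $ j = G$k$1 * H$1$j + G$k$2 * H$2$j"
    by (simp add: matrix_matrix_mult_def sum_2)
  thus ?thesis using GH by (simp add: mat_def)
qed

lemma LD: "Re (ip r (L k) (D j)) = (if k = j then 1 else 0)"
  using GH_entry[of k j] by (simp add: D_eq ip_add2 ip_scale2 G_entry[symmetric] mult.commute)

lemma DD: "Re (ip r (D i) (D k)) = H$i$k"
proof -
  have "Re (ip r (D i) (D k)) = H$1$i * Re (ip r (L 1) (D k)) + H$2$i * Re (ip r (L 2) (D k))"
    by (simp add: D_eq[of i] ip_add1 ip_scale1)
  also have "\<dots> = H$k$i" unfolding LD using exhaust_2[of k] by auto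
  finally show ?thesis using Hsym' by simp
qed

lemma trD: "trace (r ** D j) = 0"
  by (simp add: D_eq matrix_add_ldistrib scaleR_mult_right trace_add trace_scaleR trace_rL)

lemma D_unb: "locally_unbiased \<rho> \<theta> D"
  unfolding locally_unbiased_def using hD trD tr_pd[OF hD] LD by simp

lemma X_unb: assumes "locally_unbiased \<rho> \<theta> X"
  shows "hermitian (X j)" "Re (ip r (L k) (X j)) = (if k = j then 1 else 0)"
proof -
  show h: "hermitian (X j)" using assms by (simp add: locally_unbiased_def)
  have "trace (pd k \<rho> \<theta> ** X j) = (if k = j then 1 else 0)" using assms by (simp add: locally_unbiased_def)
  thus "Re (ip r (L k) (X j)) = (if k = j then 1 else 0)" using tr_pd[OF h, of k] by (auto split: if_splits)
qed

lemma Y_facts: assumes "locally_unbiased \<rho> \<theta> X"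
  shows "hermitian (X j - D j)" "Re (ip r (D i) (X j - D j)) = 0" "Re (ip r (X j - D j) (D i)) = 0"
proof -
  show h: "hermitian (X j - D j)" by (rule herm_diff[OF X_unb(1)[OF assms] hD])
  have LY: "Re (ip r (L k) (X j - D j)) = 0" for k using X_unb(2)[OF assms] LD by (simp add: ip_diff2)
  show "Re (ip r (D i) (X j - D j)) = 0" using LY by (simp add: D_eq[of i] ip_add1 ip_scale1)
  thus "Re (ip r (X j - D j) (D i)) = 0" using Re_ip_sym[OF hr hD h] by simp
qed

lemma ReXX: assumes "locally_unbiased \<rho> \<theta> X"
  shows "Re (ip r (X i) (X k)) = H$i$k + Re (ip r (X i - D i) (X k - D k))"
proof -
  have gen: "ip r (P + Q) (P' + Q') = ip r P P' + ip r P Q' + ip r Q P' + ip r Q Q'" for P Q P' Q'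
    by (simp add: ip_add1 ip_add2)
  have "ip r (X i) (X k) = ip r (D i) (D k) + ip r (D i) (X k - D k) + ip r (X i - D i) (D k)
      + ip r (X i - D i) (X k - D k)" using gen[of "D i" "X i - D i" "D k" "X k - D k"] by simp
  then show ?thesis using DD Y_facts[OF assms] by simp
qed

end

definition cscale :: "complex \<Rightarrow> cmat \<Rightarrow> cmat" where "cscale c M = (\<chi> i j. c * M$i$j)"

lemma cscale_l: "cscale c M ** N = cscale c (M ** N)"
  by (simp add: cscale_def vec_eq_iff matrix_matrix_mult_def sum_distrib_left mult.assoc)
lemma cscale_r: "M ** cscale c N = cscale c (M ** N)"
  by (simp add: cscale_def vec_eq_iff matrix_matrix_mult_def sum_distrib_left algebra_simps)
lemma cscale_tr: "trace (cscale c M) = c * trace M"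
  by (simp add: cscale_def trace_def sum_distrib_left)
lemma cscale_adj: "adj (cscale c M) = cscale (cnj c) (adj M)"
  by (simp add: cscale_def vec_eq_iff)
lemma cscale_add: "cscale c (M + N) = cscale c M + cscale c N"
  by (simp add: cscale_def vec_eq_iff algebra_simps)
lemma cscale_scaleR: "cscale c (a *\<^sub>R N) = a *\<^sub>R cscale c N"
  by (simp add: cscale_def vec_eq_iff)
lemma cscale_cscale: "cscale c (cscale d N) = cscale (c * d) N"
  by (simp add: cscale_def vec_eq_iff)
lemma cscale_neg: "cscale (- c) N = - cscale c N"
  by (simp add: cscale_def vec_eq_iff)

lemma im_half:
  assumes dm: "density_matrix r" and hA: "hermitian A" and hB: "hermitian B" and a: "0 < (\<alpha>::real)"
  shows "0 \<le> \<alpha> * \<alpha> * Re (ip r A A) + Re (ip r B B) + 2 * \<alpha> * Im (ip r A B)"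
proof -
  have hr: "hermitian r" using dm by (simp add: density_matrix_def)
  define C where "C = \<alpha> *\<^sub>R A + cscale \<i> B"
  have aC: "adj C = \<alpha> *\<^sub>R A - cscale \<i> B"
    using hA hB by (simp add: C_def adj_add adj_scaleR cscale_adj hermitian_def cscale_neg)
  have "trace (r ** C ** adj C) = (\<alpha> * \<alpha>) *\<^sub>R ip r A A - \<alpha> *\<^sub>R (\<i> * ip r A B) + \<alpha> *\<^sub>R (\<i> * ip r B A)
        + ip r B B"
    unfolding aC unfolding C_def
    by (simp add: ip_def matrix_add_ldistrib matrix_add_rdistrib' matrix_diff_ldistrib matrix_diff_rdistrib
       scaleR_mult_left scaleR_mult_right cscale_l cscale_r cscale_cscale trace_add trace_sub trace_scaleR
       cscale_tr cscale_scaleR algebra_simps)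
  also have "ip r B A = cnj (ip r A B)" using ip_conj[OF hr hA hB] .
  finally have "Re (trace (r ** C ** adj C)) = \<alpha> * \<alpha> * Re (ip r A A) + Re (ip r B B) + 2 * \<alpha> * Im (ip r A B)"
    by simp
  thus ?thesis using psd[OF dm, of C] by simp
qed

lemma im_bound:
  assumes dm: "density_matrix r" and hA: "hermitian A" and hB: "hermitian B" and a: "0 < (\<alpha>::real)"
  shows "2 * \<alpha> * \<bar>Im (ip r A B)\<bar> \<le> \<alpha> * \<alpha> * Re (ip r A A) + Re (ip r B B)"
proof -
  have hB': "hermitian (-B)" using hB by (simp add: hermitian_def vec_eq_iff)
  have "ip r A (-B) = - ip r A B" using ip_scale2[of r A "-1" B] by simp
  moreover have "ip r (-B) (-B) = ip r B B" using ip_scale2[of r "-B" "-1" B] ip_scale1[of r "-1" B B] by simp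
  ultimately show ?thesis using im_half[OF dm hA hB a] im_half[OF dm hA hB' a] by (simp add: abs_if)
qed

lemma Qlb:
  fixes p q \<beta> y1 y2 m :: real
  assumes "0 < p" "0 < q" "0 < p*q - \<beta>*\<beta>" "0 \<le> y1" "0 \<le> y2"
    and Q: "\<And>u w. 0 \<le> u * u * y1 + 2 * u * w * m + w * w * y2"
  shows "(p*q - \<beta>*\<beta>)/(p+q) * (y1 + y2) \<le> p*y1 + 2*\<beta>*m + q*y2"
proof -
  define c where "c = (p*q - \<beta>*\<beta>)/(p+q)"
  have cc: "c * (p+q) = p*q - \<beta>*\<beta>" using assms by (simp add: c_def)
  have pc: "0 < p - c"
  proof -
    have "0 < p*p" using assms by simp
    moreover have "0 \<le> \<beta>*\<beta>" by simp
    ultimately have "p*q - \<beta>*\<beta> < p*(p+q)" unfolding distrib_left by linarith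
    hence "c * (p+q) < p * (p+q)" using cc by simp
    thus ?thesis using assms by simp
  qed
  have key: "0 \<le> (p-c)*(p-c)*y1 + 2*(p-c)*\<beta>*m + \<beta>*\<beta>*y2" using Q[of "p-c" \<beta>] .
  have e: "(p-c)*(q-c) - \<beta>*\<beta> = c*c" using cc by (simp add: algebra_simps)
  have e': "(p-c)*(q-c) = c*c + \<beta>*\<beta>" using e by linarith
  have "(p-c) * ((p-c)*y1 + 2*\<beta>*m + (q-c)*y2) = (p-c)*(p-c)*y1 + 2*(p-c)*\<beta>*m + ((p-c)*(q-c))*y2"
    by (simp add: algebra_simps)
  also have "\<dots> = ((p-c)*(p-c)*y1 + 2*(p-c)*\<beta>*m + \<beta>*\<beta>*y2) + (c*c)*y2"
    unfolding e' by (simp add: algebra_simps)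
  also have "\<dots> \<ge> 0" using key assms by simp
  finally have "0 \<le> (p-c)*y1 + 2*\<beta>*m + (q-c)*y2" using pc by (simp add: zero_le_mult_iff)
  thus ?thesis by (simp add: c_def[symmetric] algebra_simps)
qed

context qm begin

lemma ReM_D: "ReM (Z_SLD \<rho> \<theta>) = H"
  by (simp add: vec_eq_iff ReM_def Z_SLD_def Zmat_def ip_def[symmetric] DD Hsym')

lemma holevo_D: "holevo_fun \<rho> \<theta> W D = SLD_CR_bound \<rho> \<theta> W + TrAbs (W ** ImM (Z_SLD \<rho> \<theta>))"
  using ReM_D by (simp add: holevo_fun_def SLD_CR_bound_def Z_SLD_def)

lemma trace_W: "trace ((W::rmat) ** M) = W$1$1 * M$1$1 + W$1$2 * M$2$1 + W$2$1 * M$1$2 + W$2$2 * M$2$2"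
  by (simp add: trace_def matrix_matrix_mult_def sum_2)

lemma holevo_lb:
  assumes W: "real_pos_def W" and X: "locally_unbiased \<rho> \<theta> X"
  shows "SLD_CR_bound \<rho> \<theta> W
      + det W / (W$1$1 + W$2$2) * (Re (ip r (X 1 - D 1) (X 1 - D 1)) + Re (ip r (X 2 - D 2) (X 2 - D 2)))
      + \<bar>Im (ip r (X 2) (X 1))\<bar> * sqrt (det W) \<le> holevo_fun \<rho> \<theta> W X"
proof -
  define Y1 where "Y1 = X 1 - D 1"
  define Y2 where "Y2 = X 2 - D 2"
  have hY1: "hermitian Y1" and hY2: "hermitian Y2" using Y_facts(1)[OF X] by (simp_all add: Y1_def Y2_def)
  define y1 where "y1 = Re (ip r Y1 Y1)"
  define y2 where "y2 = Re (ip r Y2 Y2)"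
  define m where "m = Re (ip r Y1 Y2)"
  have m21: "Re (ip r Y2 Y1) = m" using Re_ip_sym[OF hr hY1 hY2] by (simp add: m_def)
  have Wsym: "W$1$2 = W$2$1" and p: "0 < W$1$1" and q: "0 < W$2$2" and dW: "0 < det W"
    using pd2[OF W] by auto
  have dW': "det W = W$1$1 * W$2$2 - W$2$1 * W$2$1" using Wsym by (simp add: det_2)
  have RZ: "ReM (Zmat r X) $ k $ i = H$i$k + Re (ip r (X i - D i) (X i - D i)) * 0 + Re (ip r (X i - D i) (X k - D k))" for i k
    using ReXX[OF X, of i k] by (simp add: ReM_def Zmat_def ip_def)
  have T1: "trace (W ** ReM (Zmat r X)) = trace (W ** H) + (W$1$1 * y1 + 2 * W$2$1 * m + W$2$2 * y2)"
    unfolding trace_W RZ using Hsym Wsym m21 by (simp add: y1_def y2_def m_def Y1_def Y2_def algebra_simps)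
  have y1: "0 \<le> y1" and y2: "0 \<le> y2" using n_nonneg[OF dm] hY1 hY2 by (simp_all add: y1_def y2_def)
  have Qh: "0 \<le> u * u * y1 + 2 * u * w * m + w * w * y2" for u w
    using n_nonneg[OF dm herm_comb[OF hY1 hY2, of u w]] quad_expand[OF hY1 hY2, of u w]
    by (simp add: y1_def y2_def m_def)
  have Q: "det W / (W$1$1 + W$2$2) * (y1 + y2) \<le> W$1$1 * y1 + 2 * W$2$1 * m + W$2$2 * y2"
    unfolding dW' by (rule Qlb[OF p q _ y1 y2 Qh]) (use dW dW' in simp)
  have hX1: "hermitian (X 1)" and hX2: "hermitian (X 2)" using X_unb(1)[OF X] by auto
  have TA0: "\<bar>ImM (Zmat r X) $ 1 $ 2\<bar> * sqrt (det W) \<le> TrAbs (W ** ImM (Zmat r X))"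
    by (rule TrAbs_lb[OF Wsym]) (use dW ip_self_real[OF hr hX1] ip_self_real[OF hr hX2]
          Im_ip_anti[OF hr hX2 hX1] in \<open>simp_all add: ImM_def Zmat_def ip_def\<close>)
  have "ImM (Zmat r X) $ 1 $ 2 = Im (ip r (X 2) (X 1))" by (simp add: ImM_def Zmat_def ip_def)
  with TA0 have TA: "\<bar>Im (ip r (X 2) (X 1))\<bar> * sqrt (det W) \<le> TrAbs (W ** ImM (Zmat r X))" by simp
  show ?thesis using T1 Q TA
    by (simp add: holevo_fun_def SLD_CR_bound_def y1_def y2_def Y1_def Y2_def)
qed

end

lemma final_arith:
  fixes c \<sigma> A \<kappa> y a b :: real
  assumes "0 < c" "0 < \<sigma>" "0 < A" "0 < \<kappa>" "0 \<le> y" "\<bar>b - a\<bar> \<le> A/4 + \<kappa>*y" "A = \<bar>a\<bar>"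
  shows "min (c*A/(4*\<kappa>)) (\<sigma>*A/2) \<le> c*y + \<sigma>*\<bar>b\<bar>"
proof (cases "A/(4*\<kappa>) \<le> y")
  case True
  hence "c*(A/(4*\<kappa>)) \<le> c*y" using assms by (intro mult_left_mono) auto
  moreover have "0 \<le> \<sigma>*\<bar>b\<bar>" using assms by simp
  ultimately show ?thesis by (simp add: min_le_iff_disj)
next
  case False
  hence "\<kappa> * y < \<kappa> * (A/(4*\<kappa>))" using assms by (intro mult_strict_left_mono) auto
  hence "\<kappa> * y < A/4" using assms by simp
  hence "A/2 \<le> \<bar>b\<bar>" using assms by linarith
  hence "\<sigma>*(A/2) \<le> \<sigma>*\<bar>b\<bar>" using assms by (intro mult_left_mono) auto
  moreover have "0 \<le> c*y" using assms by simp
  ultimately show ?thesis by (simp add: min_le_iff_disj)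
qed

lemma alpha_arith:
  fixes \<alpha> ll A n1 n2 y1 y2 e1 e2 e3 :: real
  assumes "\<alpha> = A/(2*ll)" "0 < ll" "0 < A" "n1 + n2 \<le> ll" "0 \<le> y1" "0 \<le> y2"
    "2*\<alpha>*\<bar>e1\<bar> \<le> \<alpha>*\<alpha>*n2 + y1" "2*\<alpha>*\<bar>e2\<bar> \<le> \<alpha>*\<alpha>*n1 + y2" "2*\<bar>e3\<bar> \<le> y1 + y2"
  shows "\<bar>e1 + e2 + e3\<bar> \<le> A/4 + (1+\<alpha>)/(2*\<alpha>) * (y1 + y2)"
proof -
  have a: "0 < \<alpha>" using assms by simp
  have "2*\<alpha>*\<bar>e3\<bar> \<le> \<alpha>*(y1+y2)" using assms(9) a
    by (metis mult.assoc mult.commute mult_left_mono less_imp_le)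
  moreover have "\<bar>e1 + e2 + e3\<bar> \<le> \<bar>e1\<bar> + \<bar>e2\<bar> + \<bar>e3\<bar>" by (simp add: abs_triangle_ineq4)
  hence "2*\<alpha>*\<bar>e1 + e2 + e3\<bar> \<le> 2*\<alpha>*\<bar>e1\<bar> + 2*\<alpha>*\<bar>e2\<bar> + 2*\<alpha>*\<bar>e3\<bar>"
    using a by (metis (no_types) distrib_left mult_left_mono less_imp_le zero_less_mult_iff zero_less_numeral)
  moreover have "\<alpha>*\<alpha>*(n1+n2) \<le> \<alpha>*\<alpha>*ll" using assms(4) a by (intro mult_left_mono) auto
  moreover have "\<alpha>*ll = A/2" using assms by simp
  hence "\<alpha>*\<alpha>*ll = \<alpha>*A/2" by (metis mult.assoc times_divide_eq_right)
  moreover have "\<alpha>*\<alpha>*(n1+n2) = \<alpha>*\<alpha>*n1 + \<alpha>*\<alpha>*n2" "\<alpha>*(y1+y2) = \<alpha>*y1 + \<alpha>*y2"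
    "(1+\<alpha>)*(y1+y2) = y1 + y2 + \<alpha>*y1 + \<alpha>*y2" by (simp_all add: algebra_simps)
  ultimately have "2*\<alpha>*\<bar>e1 + e2 + e3\<bar> \<le> \<alpha>*A/2 + (1+\<alpha>)*(y1+y2)"
    using assms(7,8) by linarith
  hence "\<bar>e1 + e2 + e3\<bar> \<le> (\<alpha>*A/2 + (1+\<alpha>)*(y1+y2)) / (2*\<alpha>)"
    using a by (simp add: pos_le_divide_eq mult.commute)
  also have "\<dots> = A/4 + (1+\<alpha>)/(2*\<alpha>) * (y1 + y2)" using a by (simp add: field_simps)
  finally show ?thesis .
qed

context qm begin

lemma D_herm: "hermitian (D 1)" "hermitian (D 2)" using hD by auto

lemma ImZ_entries: "ImM (Z_SLD \<rho> \<theta>) $ 1 $ 1 = 0" "ImM (Z_SLD \<rho> \<theta>) $ 2 $ 2 = 0"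
   "ImM (Z_SLD \<rho> \<theta>) $ 1 $ 2 = Im (ip r (D 2) (D 1))"
   "ImM (Z_SLD \<rho> \<theta>) $ 2 $ 1 = - Im (ip r (D 2) (D 1))"
  using ip_self_real[OF hr hD] Im_ip_anti[OF hr D_herm(2) D_herm(1)]
  by (simp_all add: ImM_def Z_SLD_def Zmat_def ip_def)

lemma ImZ_zero_iff: "ImM (Z_SLD \<rho> \<theta>) = 0 \<longleftrightarrow> Im (ip r (D 2) (D 1)) = 0"
  using ImZ_entries by (auto simp: vec_eq_iff forall_2)

lemma set_ne: "{holevo_fun \<rho> \<theta> W X | X. locally_unbiased \<rho> \<theta> X} \<noteq> {}"
  using D_unb by blast

lemma ii_i: assumes "ImM (Z_SLD \<rho> \<theta>) = 0" "real_pos_def W"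
  shows "holevo_bound \<rho> \<theta> W = SLD_CR_bound \<rho> \<theta> W"
  unfolding holevo_bound_def
proof (rule cInf_eq_minimum)
  show "SLD_CR_bound \<rho> \<theta> W \<in> {holevo_fun \<rho> \<theta> W X | X. locally_unbiased \<rho> \<theta> X}"
  proof -
    have "holevo_fun \<rho> \<theta> W D = SLD_CR_bound \<rho> \<theta> W"
      using holevo_D[of W] assms(1) TrAbs_zero[of W] by simp
    thus ?thesis using D_unb by (metis (mono_tags, lifting) mem_Collect_eq)
  qed
next
  fix x assume "x \<in> {holevo_fun \<rho> \<theta> W X | X. locally_unbiased \<rho> \<theta> X}"
  then obtain X where X: "locally_unbiased \<rho> \<theta> X" and x: "x = holevo_fun \<rho> \<theta> W X" by blast
  have hY: "hermitian (X j - D j)" for j using Y_facts(1)[OF X] .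
  have "0 \<le> det W / (W$1$1 + W$2$2)" using pd2[OF assms(2)] by simp
  moreover have "0 \<le> Re (ip r (X 1 - D 1) (X 1 - D 1)) + Re (ip r (X 2 - D 2) (X 2 - D 2))"
    using n_nonneg[OF dm hY] by (simp add: add_nonneg_nonneg)
  ultimately have "0 \<le> det W / (W$1$1 + W$2$2) * (Re (ip r (X 1 - D 1) (X 1 - D 1)) + Re (ip r (X 2 - D 2) (X 2 - D 2)))"
    by (rule mult_nonneg_nonneg)
  moreover have "0 \<le> \<bar>Im (ip r (X 2) (X 1))\<bar> * sqrt (det W)" using pd2[OF assms(2)] by simp
  ultimately show "SLD_CR_bound \<rho> \<theta> W \<le> x" using holevo_lb[OF assms(2) X] x by linarith
qed

lemma iii_ii: assumes W: "real_pos_def W" and eq: "holevo_bound \<rho> \<theta> W = SLD_CR_bound \<rho> \<theta> W"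
  shows "ImM (Z_SLD \<rho> \<theta>) = 0"
proof (rule ccontr)
  assume "ImM (Z_SLD \<rho> \<theta>) \<noteq> 0"
  hence a0: "Im (ip r (D 2) (D 1)) \<noteq> 0" using ImZ_zero_iff by simp
  define a where "a = Im (ip r (D 2) (D 1))"
  define A where "A = \<bar>a\<bar>"
  define n1 where "n1 = Re (ip r (D 1) (D 1))"
  define n2 where "n2 = Re (ip r (D 2) (D 2))"
  define ll where "ll = n1 + n2 + 1"
  define \<alpha> where "\<alpha> = A / (2 * ll)"
  define \<kappa> where "\<kappa> = (1 + \<alpha>) / (2 * \<alpha>)"
  define c where "c = det W / (W$1$1 + W$2$2)"
  define \<sigma> where "\<sigma> = sqrt (det W)"
  define \<epsilon> where "\<epsilon> = min (c*A/(4*\<kappa>)) (\<sigma>*A/2)"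
  have n1: "0 \<le> n1" and n2: "0 \<le> n2" using n_nonneg[OF dm hD] by (simp_all add: n1_def n2_def)
  have ll: "0 < ll" using n1 n2 by (simp add: ll_def)
  have A: "0 < A" using a0 by (simp add: A_def a_def)
  have al: "0 < \<alpha>" using A ll by (simp add: \<alpha>_def)
  have ka: "0 < \<kappa>" using al by (simp add: \<kappa>_def)
  have c: "0 < c" using pd2[OF W] by (simp add: c_def)
  have sg: "0 < \<sigma>" using pd2[OF W] by (simp add: \<sigma>_def)
  have ep: "0 < \<epsilon>" using c sg A ka by (simp add: \<epsilon>_def)
  have bound: "SLD_CR_bound \<rho> \<theta> W + \<epsilon> \<le> holevo_fun \<rho> \<theta> W X" if X: "locally_unbiased \<rho> \<theta> X" for X
  proof -
    define Y1 where "Y1 = X 1 - D 1"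
    define Y2 where "Y2 = X 2 - D 2"
    have hY1: "hermitian Y1" and hY2: "hermitian Y2" using Y_facts(1)[OF X] by (simp_all add: Y1_def Y2_def)
    define y1 where "y1 = Re (ip r Y1 Y1)"
    define y2 where "y2 = Re (ip r Y2 Y2)"
    have y1: "0 \<le> y1" and y2: "0 \<le> y2" using n_nonneg[OF dm] hY1 hY2 by (simp_all add: y1_def y2_def)
    define b where "b = Im (ip r (X 2) (X 1))"
    have gen: "ip r (P + Q) (P' + Q') = ip r P P' + ip r P Q' + ip r Q P' + ip r Q Q'" for P Q P' Q'
      by (simp add: ip_add1 ip_add2)
    have "ip r (X 2) (X 1) = ip r (D 2) (D 1) + ip r (D 2) Y1 + ip r Y2 (D 1) + ip r Y2 Y1"
      using gen[of "D 2" Y2 "D 1" Y1] by (simp add: Y1_def Y2_def)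
    hence bma: "b - a = Im (ip r (D 2) Y1) + Im (ip r Y2 (D 1)) + Im (ip r Y2 Y1)"
      by (simp add: a_def b_def)
    have e1: "2*\<alpha>*\<bar>Im (ip r (D 2) Y1)\<bar> \<le> \<alpha>*\<alpha>*n2 + y1"
      using im_bound[OF dm D_herm(2) hY1 al] by (simp add: n2_def y1_def)
    have e2: "2*\<alpha>*\<bar>Im (ip r Y2 (D 1))\<bar> \<le> \<alpha>*\<alpha>*n1 + y2"
      using im_bound[OF dm D_herm(1) hY2 al] Im_ip_anti[OF hr D_herm(1) hY2] by (simp add: n1_def y2_def)
    have e3: "2*\<bar>Im (ip r Y2 Y1)\<bar> \<le> y1 + y2"
      using im_bound[OF dm hY2 hY1, of 1] by (simp add: y1_def y2_def add.commute)
    have "\<bar>b - a\<bar> \<le> A/4 + \<kappa> * (y1 + y2)"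
      unfolding bma \<kappa>_def by (rule alpha_arith[OF \<alpha>_def ll A _ y1 y2 e1 e2 e3]) (simp add: ll_def)
    hence "\<epsilon> \<le> c*(y1+y2) + \<sigma>*\<bar>b\<bar>" unfolding \<epsilon>_def
      using final_arith[OF c sg A ka _ _ A_def] y1 y2 by simp
    moreover have "SLD_CR_bound \<rho> \<theta> W + c*(y1+y2) + \<bar>b\<bar> * \<sigma> \<le> holevo_fun \<rho> \<theta> W X"
      using holevo_lb[OF W X] by (simp add: c_def y1_def y2_def Y1_def Y2_def b_def \<sigma>_def)
    ultimately show ?thesis by (simp add: mult.commute)
  qed
  have "SLD_CR_bound \<rho> \<theta> W + \<epsilon> \<le> holevo_bound \<rho> \<theta> W"
    unfolding holevo_bound_def by (rule cInf_greatest[OF set_ne]) (use bound in blast)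
  with eq ep show False by simp
qed

end

lemma real_pos_def_one: "real_pos_def (mat 1)"
  by (simp add: real_pos_def_def inner_gt_zero_iff)

theorem proposition3:
  fixes \<Theta> :: "(real^2) set" and \<rho> :: "real^2 \<Rightarrow> complex^2^2" and \<theta> :: "real^2"
  assumes "regular_qubit_model \<Theta> \<rho>" and "\<theta> \<in> \<Theta>"
  shows "((\<forall>W. real_pos_def W \<longrightarrow> holevo_bound \<rho> \<theta> W = SLD_CR_bound \<rho> \<theta> W)
           \<longleftrightarrow> ImM (Z_SLD \<rho> \<theta>) = 0)
       \<and> (ImM (Z_SLD \<rho> \<theta>) = 0
           \<longleftrightarrow> (\<exists>W0. real_pos_def W0 \<and> holevo_bound \<rho> \<theta> W0 = SLD_CR_bound \<rho> \<theta> W0))"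
proof -
  interpret qm \<Theta> \<rho> \<theta> using assms by unfold_locales
  show ?thesis using ii_i iii_ii real_pos_def_one by blast
qed

end
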